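(* Let $\mu,\gamma,\eta$ be vertices of $\Gamma$ and $\varphi_\eta=\varphi^{[\mu,\gamma]}_\eta$. Then $\varphi_\eta(\nu)\ge0$ for every vertex $\nu$, with $\varphi_\eta(\nu)>0$ if and only if $\nu\in\Gamma^\mu_\gamma$. If $\nu,\nu'\in[\mu,\gamma]$ and $d(\mu,\nu)<d(\mu,\nu')$, then $\varphi_\eta(\nu)<\varphi_\eta(\nu')$. Furthermore, if $\eta\in[\mu,\gamma]$, then $\varphi_\eta$ is constant on any path of $\Gamma$ meeting $[\mu,\gamma]$ in at most one vertex.
   Context: Setting: $R$ two-dimensional regular local ring with algebraically closed residue field; $\pi:X=X_{N+1}\to\cdots\to X_1=\operatorname{Spec}R$ a composition of point blowups; $E_\nu$ strict transforms of exceptional divisors; proximity matrix $P$ ($p_{\mu,\mu}=1$, $p_{\mu,\nu}=-1$ if $x_\mu$ lies on the strict transform on $X_\mu$ of the exceptional divisor of the blowup of $x_\nu$, else $0$), valuation matrix $V=(P^TP)^{-1}$ (symmetric, positive entries). Dual graph $\Gamma$ on vertices $1..N$, $\gamma\sim\eta$ iff $\gamma\ne\eta$ and $E_\gamma\cap E_\eta\neq\emptyset$ (a tree); $[\mu,\gamma]$ the path from $\mu$ to $\gamma$; $d$ the graph distance; branch $\Gamma^\mu_\gamma$ = maximal connected subgraph containing $\gamma$ but not $\mu$ ($\Gamma^\mu_\mu=\emptyset$). $\mathbf 1_i$ standard basis vector of $\mathbb Q^\Gamma$; $\rho_{[\alpha,\beta]}(\nu)=V_{\beta,\nu}/V_{\alpha,\nu}$;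 $\widehat r_{[\mu,\gamma]}=\mathbf 1_\gamma-\rho_{[\mu,\gamma]}(\mu)\mathbf 1_\mu$; $\varphi^{[\mu,\gamma]}_\eta(\nu)=(\widehat r_{[\mu,\gamma]}V)_\nu/V_{\eta,\nu}$. *)

theory Defs
  imports Main "Jordan_Normal_Form.Gauss_Jordan_Elimination"
begin

text \<open>Combinatorial encoding of a composition of N point blowups over a two-dimensional
regular local ring with algebraically closed residue field.  Points x_1..x_N are indexed
0..N-1 (index i corresponds to x_(i+1)).  prox m n means: x_m lies on the strict transform
on X_m of the exceptional divisor of the blowup of x_n.  The realizability conditions below
characterise exactly the proximity relations arising from such sequences of blowups.\<close>

definition proximity_structure :: "nat \<Rightarrow> (nat \<Rightarrow> nat \<Rightarrow> bool) \<Rightarrow> bool" where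
  "proximity_structure N prox \<longleftrightarrow>
     (\<forall>m n. prox m n \<longrightarrow> n < m \<and> m < N) \<and>
     (\<forall>m. 0 < m \<and> m < N \<longrightarrow> 1 \<le> card {n. prox m n} \<and> card {n. prox m n} \<le> 2) \<and>
     (\<forall>m n r. prox m n \<and> prox m r \<and> n < r \<longrightarrow> prox r n) \<and>
     (\<forall>m m' n r. prox m n \<and> prox m r \<and> prox m' n \<and> prox m' r \<and> n < r \<longrightarrow> m = m')"

definition prox_matrix :: "nat \<Rightarrow> (nat \<Rightarrow> nat \<Rightarrow> bool) \<Rightarrow> real mat" where
  "prox_matrix N prox = mat N N (\<lambda>(i, j). if i = j then 1 else if prox i j then -1 else 0)"

definition val_matrix :: "nat \<Rightarrow> (nat \<Rightarrow> nat \<Rightarrow> bool) \<Rightarrow> real mat" where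
  "val_matrix N prox =
     the (mat_inverse (transpose_mat (prox_matrix N prox) * prox_matrix N prox))"

text \<open>Dual graph: strict transforms E_g, E_h (g < h) meet on X_(N+1) iff x_h was on E_g
when blown up and the intersection point was never blown up afterwards.\<close>
definition dual_adj :: "nat \<Rightarrow> (nat \<Rightarrow> nat \<Rightarrow> bool) \<Rightarrow> nat \<Rightarrow> nat \<Rightarrow> bool" where
  "dual_adj N prox g h \<longleftrightarrow> g < N \<and> h < N \<and> g \<noteq> h \<and>
     (let a = min g h; b = max g h in prox b a \<and> \<not> (\<exists>k. prox k a \<and> prox k b))"

definition is_walk :: "nat \<Rightarrow> (nat \<Rightarrow> nat \<Rightarrow> bool) \<Rightarrow> nat list \<Rightarrow> bool" where
  "is_walk N prox xs \<longleftrightarrow> xs \<noteq> [] \<and> (\<forall>v\<in>set xs. v < N) \<and>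
     (\<forall>i. Suc i < length xs \<longrightarrow> dual_adj N prox (xs ! i) (xs ! Suc i))"

definition is_path :: "nat \<Rightarrow> (nat \<Rightarrow> nat \<Rightarrow> bool) \<Rightarrow> nat list \<Rightarrow> bool" where
  "is_path N prox xs \<longleftrightarrow> is_walk N prox xs \<and> distinct xs"

text \<open>Vertex set of the path [a,b] (unique since the dual graph is a tree).\<close>
definition path_between :: "nat \<Rightarrow> (nat \<Rightarrow> nat \<Rightarrow> bool) \<Rightarrow> nat \<Rightarrow> nat \<Rightarrow> nat set" where
  "path_between N prox a b = {v. \<exists>xs. is_path N prox xs \<and> hd xs = a \<and> last xs = b \<and> v \<in> set xs}"

definition gdist :: "nat \<Rightarrow> (nat \<Rightarrow> nat \<Rightarrow> bool) \<Rightarrow> nat \<Rightarrow> nat \<Rightarrow> nat" where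
  "gdist N prox a b = (LEAST n. \<exists>xs. is_walk N prox xs \<and> hd xs = a \<and> last xs = b \<and> length xs = Suc n)"

definition branch :: "nat \<Rightarrow> (nat \<Rightarrow> nat \<Rightarrow> bool) \<Rightarrow> nat \<Rightarrow> nat \<Rightarrow> nat set" where
  "branch N prox m g = {v. \<exists>xs. is_walk N prox xs \<and> hd xs = g \<and> last xs = v \<and> m \<notin> set xs}"

definition rho :: "nat \<Rightarrow> (nat \<Rightarrow> nat \<Rightarrow> bool) \<Rightarrow> nat \<Rightarrow> nat \<Rightarrow> nat \<Rightarrow> real" where
  "rho N prox a b n = val_matrix N prox $$ (b, n) / val_matrix N prox $$ (a, n)"

text \<open>(r V)_n is computed as the dot product of r with column n of V.  The row vector hat r_[m,g] = 1_g - rho_[m,g](m) 1_m.\<close>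
definition rhat :: "nat \<Rightarrow> (nat \<Rightarrow> nat \<Rightarrow> bool) \<Rightarrow> nat \<Rightarrow> nat \<Rightarrow> real vec" where
  "rhat N prox m g = unit_vec N g - rho N prox m g m \<cdot>\<^sub>v unit_vec N m"

definition phi :: "nat \<Rightarrow> (nat \<Rightarrow> nat \<Rightarrow> bool) \<Rightarrow> nat \<Rightarrow> nat \<Rightarrow> nat \<Rightarrow> nat \<Rightarrow> real" where
  "phi N prox m g h n =
     (rhat N prox m g \<bullet> col (val_matrix N prox) n) / val_matrix N prox $$ (h, n)"

end

theory Submission
  imports Defs "Jordan_Normal_Form.Determinant"
begin


locale PS =
  fixes N :: nat and prox :: "nat \<Rightarrow> nat \<Rightarrow> bool"
  assumes ps: "proximity_structure N prox"
begin

lemma prox_lt: "prox k n \<Longrightarrow> n < k \<and> k < N"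
  using ps unfolding proximity_structure_def by blast

lemma prox_tri: "prox m n \<Longrightarrow> prox m r \<Longrightarrow> n < r \<Longrightarrow> prox r n"
  using ps unfolding proximity_structure_def by blast

lemma prox_uniq: "prox m n \<Longrightarrow> prox m r \<Longrightarrow> prox m' n \<Longrightarrow> prox m' r \<Longrightarrow> n < r \<Longrightarrow> m = m'"
  using ps unfolding proximity_structure_def by blast

lemma prox_fin: "finite {n. prox m n}"
  by (rule finite_subset[of _ "{..<m}"]) (auto dest: prox_lt)

lemma prox_exists: "0 < m \<Longrightarrow> m < N \<Longrightarrow> \<exists>n. prox m n"
proof -
  assume "0 < m" "m < N"
  then have "1 \<le> card {n. prox m n}" using ps unfolding proximity_structure_def by blast
  then have "{n. prox m n} \<noteq> {}" by (metis card.empty not_one_le_zero)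
  then show ?thesis by blast
qed

lemma prox_three: "prox m x \<Longrightarrow> prox m y \<Longrightarrow> prox m z \<Longrightarrow> x = y \<or> x = z \<or> y = z"
proof (rule ccontr)
  assume a: "prox m x" "prox m y" "prox m z" "\<not> (x = y \<or> x = z \<or> y = z)"
  then have m: "0 < m" "m < N" using prox_lt by fastforce+
  have "card {x,y,z} \<le> card {n. prox m n}"
    by (rule card_mono[OF prox_fin]) (use a in auto)
  also have "\<dots> \<le> 2" using ps m unfolding proximity_structure_def by blast
  finally show False using a by auto
qed

definition pe :: "nat \<Rightarrow> nat \<Rightarrow> real" where
  "pe k i = (if k = i then 1 else if prox k i then -1 else 0)"

definition aa :: "nat \<Rightarrow> nat \<Rightarrow> real" where
  "aa i j = (\<Sum>k<N. pe k i * pe k j)"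

abbreviation adj where "adj \<equiv> dual_adj N prox"

lemma aa_sym: "aa i j = aa j i"
  unfolding aa_def by (simp add: mult.commute)

lemma adj_sym: "adj i j = adj j i"
  unfolding dual_adj_def Let_def by (auto simp: min.commute max.commute)

lemma adj_lt: "adj i j \<Longrightarrow> i < N \<and> j < N \<and> i \<noteq> j"
  unfolding dual_adj_def by auto

lemma aa_off_lt:
  assumes ij: "i < j" and jN: "j < N"
  shows "aa i j = (if adj i j then -1 else 0)"
proof -
  let ?K = "{k. prox k i \<and> prox k j}"
  have split: "pe k i * pe k j = (if k = j then (if prox j i then -1 else 0) else 0)
       + (if prox k i \<and> prox k j then 1 else 0)" for k
    using ij prox_lt[of k i] prox_lt[of k j] prox_lt[of i j]
    unfolding pe_def by auto
  have s1: "(\<Sum>k<N. (if k = j then (if prox j i then -1 else 0) else 0::real)) = (if prox j i then -1 else 0)"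
    using jN by (simp add: sum.delta)
  have ad: "adj i j \<longleftrightarrow> prox j i \<and> \<not> (\<exists>k. prox k i \<and> prox k j)"
    using ij jN unfolding dual_adj_def Let_def by (auto simp: min_def max_def)
  show ?thesis
  proof (cases "\<exists>k. prox k i \<and> prox k j")
    case True
    then obtain k0 where k0: "prox k0 i" "prox k0 j" by blast
    have pji: "prox j i" using prox_tri[OF k0 ij] .
    have eq: "(if prox k i \<and> prox k j then 1 else 0::real) = (if k = k0 then 1 else 0)" for k
    proof (cases "k = k0")
      case True then show ?thesis using k0 by simp
    next
      case False then show ?thesis using prox_uniq[of k i j k0] k0 ij by auto
    qed
    have k0N: "k0 < N" using prox_lt[OF k0(1)] by simp
    have "aa i j = (if prox j i then -1 else 0) + (\<Sum>k<N. (if k = k0 then 1 else 0::real))"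
      unfolding aa_def split sum.distrib s1 eq ..
    also have "\<dots> = 0" using pji k0N by (simp add: sum.delta)
    finally show ?thesis using ad True by simp
  next
    case False
    have "aa i j = (if prox j i then -1 else 0) + (\<Sum>k<N. (if prox k i \<and> prox k j then 1 else 0::real))"
      unfolding aa_def split sum.distrib s1 ..
    also have "\<dots> = (if prox j i then -1 else 0)"
    proof -
      have "(\<Sum>k<N. (if prox k i \<and> prox k j then 1 else 0::real)) = 0"
        using False by (intro sum.neutral) auto
      then show ?thesis by simp
    qed
    finally show ?thesis using ad False by simp
  qed
qed

lemma aa_off:
  assumes "i \<noteq> j" "i < N" "j < N"
  shows "aa i j = (if adj i j then -1 else 0)"
proof (cases "i < j")
  case True then show ?thesis using aa_off_lt assms by auto
next
  case False then have "j < i" using assms by auto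
  then show ?thesis using aa_off_lt[of j i] assms aa_sym[of i j] adj_sym[of i j] by auto
qed

lemma aa_nonpos: "i \<noteq> j \<Longrightarrow> i < N \<Longrightarrow> j < N \<Longrightarrow> aa i j \<le> 0"
  using aa_off by auto

lemma PtP_entry:
  assumes "i < N" "j < N"
  shows "(transpose_mat (prox_matrix N prox) * prox_matrix N prox) $$ (i,j) = aa i j"
  using assms unfolding prox_matrix_def aa_def pe_def
  by (simp add: scalar_prod_def atLeast0LessThan)

definition Ax :: "(nat \<Rightarrow> real) \<Rightarrow> nat \<Rightarrow> real" where
  "Ax x i = (\<Sum>j<N. aa i j * x j)"

definition bl :: "(nat \<Rightarrow> real) \<Rightarrow> (nat \<Rightarrow> real) \<Rightarrow> real" where
  "bl x y = (\<Sum>i<N. x i * Ax y i)"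

lemma bl_double: "bl x y = (\<Sum>i<N. \<Sum>j<N. x i * aa i j * y j)"
  unfolding bl_def Ax_def by (simp add: sum_distrib_left mult.assoc)

lemma bl_sym: "bl x y = bl y x"
proof -
  have "bl x y = (\<Sum>j<N. \<Sum>i<N. x i * aa i j * y j)" unfolding bl_double by (rule sum.swap)
  also have "\<dots> = bl y x" unfolding bl_double
    by (intro sum.cong refl) (simp add: aa_sym[of _ "_"] mult_ac)
  finally show ?thesis .
qed

lemma Ax_diff: "Ax (\<lambda>j. x j - y j) i = Ax x i - Ax y i"
  unfolding Ax_def by (simp add: right_diff_distrib sum_subtractf)

lemma bl_diff1: "bl (\<lambda>i. x i - y i) z = bl x z - bl y z"
  unfolding bl_def by (simp add: left_diff_distrib sum_subtractf)

lemma bl_diff2: "bl z (\<lambda>i. x i - y i) = bl z x - bl z y"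
  unfolding bl_def Ax_diff by (simp add: right_diff_distrib sum_subtractf)

lemma bl_sq: "bl x x = (\<Sum>k<N. (\<Sum>i<N. pe k i * x i)^2)"
proof -
  have "bl x x = (\<Sum>i<N. \<Sum>j<N. \<Sum>k<N. (pe k i * x i) * (pe k j * x j))"
    unfolding bl_double aa_def by (simp add: sum_distrib_left sum_distrib_right mult_ac)
  also have "\<dots> = (\<Sum>i<N. \<Sum>k<N. \<Sum>j<N. (pe k i * x i) * (pe k j * x j))"
    by (intro sum.cong refl sum.swap)
  also have "\<dots> = (\<Sum>k<N. \<Sum>i<N. \<Sum>j<N. (pe k i * x i) * (pe k j * x j))"
    by (rule sum.swap)
  also have "\<dots> = (\<Sum>k<N. (\<Sum>i<N. pe k i * x i)^2)"
    by (simp add: power2_eq_square sum_product)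
  finally show ?thesis .
qed

lemma bl_nonneg: "bl x x \<ge> 0"
  unfolding bl_sq by (simp add: sum_nonneg)

lemma bl_zero:
  assumes "bl x x = 0"
  shows "\<forall>k<N. x k = 0"
proof -
  have z: "\<forall>k<N. (\<Sum>i<N. pe k i * x i) = 0"
    using assms unfolding bl_sq by (simp add: sum_nonneg_eq_0_iff)
  have "k < N \<longrightarrow> x k = 0" for k
  proof (induction k rule: less_induct)
    case (less k)
    show ?case
    proof
      assume kN: "k < N"
      have "(\<Sum>i<N. pe k i * x i) = pe k k * x k"
      proof (rule sum.remove[THEN trans])
        show "k \<in> {..<N}" "finite {..<N}" using kN by auto
        have "(\<Sum>i\<in>{..<N} - {k}. pe k i * x i) = 0"
        proof (rule sum.neutral, intro ballI)
          fix i assume i: "i \<in> {..<N} - {k}"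
          show "pe k i * x i = 0"
          proof (cases "prox k i")
            case True then have "i < k" using prox_lt by blast
            then show ?thesis using less.IH i by auto
          next
            case False then show ?thesis using i by (simp add: pe_def)
          qed
        qed
        then show "pe k k * x k + (\<Sum>i\<in>{..<N} - {k}. pe k i * x i) = pe k k * x k" by simp
      qed
      then show "x k = 0" using z kN by (simp add: pe_def)
    qed
  qed
  then show ?thesis by blast
qed

lemma nonneg_principle:
  assumes hyp: "\<And>i. i < N \<Longrightarrow> x i < 0 \<Longrightarrow> Ax x i \<ge> 0"
  shows "\<And>i. i < N \<Longrightarrow> x i \<ge> 0"
proof -
  define y where "y i = \<bar>x i\<bar>" for i
  have qy: "bl y y \<le> bl x x"
    unfolding bl_double
  proof (intro sum_mono)
    fix i j assume i: "i \<in> {..<N}" and j: "j \<in> {..<N}"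
    show "y i * aa i j * y j \<le> x i * aa i j * x j"
    proof (cases "i = j")
      case True then show ?thesis by (simp add: y_def abs_mult_self_eq)
    next
      case False
      then have "aa i j \<le> 0" using aa_nonpos i j by auto
      moreover have "x i * x j \<le> y i * y j" unfolding y_def by (metis abs_ge_self abs_mult)
      ultimately have "aa i j * (y i * y j) \<le> aa i j * (x i * x j)"
        by (simp add: mult_left_mono_neg)
      then show ?thesis by (simp add: mult_ac)
    qed
  qed
  have eq: "bl (\<lambda>i. y i - x i) (\<lambda>i. y i - x i) = bl y y - 2 * bl y x + bl x x"
    unfolding bl_diff1 bl_diff2 using bl_sym[of x y] by simp
  have "bl y x = (\<Sum>i<N. y i * Ax x i)" unfolding bl_def ..
  moreover have "bl x x = (\<Sum>i<N. x i * Ax x i)" unfolding bl_def ..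
  moreover have "(\<Sum>i<N. (x i - y i) * Ax x i) \<le> 0"
  proof (rule sum_nonpos)
    fix i assume i: "i \<in> {..<N}"
    show "(x i - y i) * Ax x i \<le> 0"
    proof (cases "x i < 0")
      case True then have "Ax x i \<ge> 0" using hyp i by auto
      moreover have "x i - y i \<le> 0" unfolding y_def by simp
      ultimately show ?thesis by (simp add: mult_nonpos_nonneg)
    next
      case False then show ?thesis by (simp add: y_def)
    qed
  qed
  ultimately have "bl x x - bl y x \<le> 0"
    by (simp add: left_diff_distrib sum_subtractf)
  then have "bl (\<lambda>i. y i - x i) (\<lambda>i. y i - x i) \<le> 0" using eq qy by linarith
  then have "bl (\<lambda>i. y i - x i) (\<lambda>i. y i - x i) = 0" using bl_nonneg by (meson order.antisym)
  from bl_zero[OF this] show "\<And>i. i < N \<Longrightarrow> x i \<ge> 0" unfolding y_def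
    by (metis abs_ge_zero eq_iff_diff_eq_0)
qed

lemma Ax_zero_point:
  assumes nn: "\<And>i. i < N \<Longrightarrow> x i \<ge> 0" and q: "q < N" and xq: "x q = 0"
  shows "Ax x q \<le> 0" and "adj q p \<Longrightarrow> x p > 0 \<Longrightarrow> Ax x q < 0"
proof -
  have t: "aa q j * x j \<le> 0" if "j < N" for j
  proof (cases "j = q")
    case True then show ?thesis using xq by simp
  next
    case False then show ?thesis using aa_nonpos[of q j] q that nn[OF that]
      by (simp add: mult_nonpos_nonneg)
  qed
  show "Ax x q \<le> 0" unfolding Ax_def by (rule sum_nonpos) (use t in auto)
  assume a: "adj q p" "x p > 0"
  then have pN: "p < N" "p \<noteq> q" using adj_lt by auto
  have "aa q p = -1" using aa_off[of q p] a pN q by auto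
  then have lt: "aa q p * x p < 0" using a by simp
  have "Ax x q = aa q p * x p + (\<Sum>j\<in>{..<N} - {p}. aa q j * x j)"
    unfolding Ax_def using pN by (simp add: sum.remove)
  also have "\<dots> < 0" using lt sum_nonpos[of "{..<N} - {p}" "\<lambda>j. aa q j * x j"] t by auto
  finally show "Ax x q < 0" .
qed

lemma green:
  assumes S: "S \<subseteq> {..<N}"
  shows "(\<Sum>i\<in>S. w i * Ax u i - u i * Ax w i)
       = (\<Sum>i\<in>S. \<Sum>j\<in>{..<N} - S. aa i j * (w i * u j - u i * w j))"
proof -
  have fin: "finite S" using S finite_subset by blast
  have dec: "(\<Sum>j<N. f j) = (\<Sum>j\<in>S. f j) + (\<Sum>j\<in>{..<N} - S. f j)" for f :: "nat \<Rightarrow> real"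
    using S by (metis finite_lessThan sum.subset_diff add.commute)
  have "(\<Sum>i\<in>S. w i * Ax u i - u i * Ax w i) = (\<Sum>i\<in>S. \<Sum>j<N. aa i j * (w i * u j - u i * w j))"
    unfolding Ax_def by (simp add: sum_distrib_left right_diff_distrib sum_subtractf mult_ac)
  also have "\<dots> = (\<Sum>i\<in>S. \<Sum>j\<in>S. aa i j * (w i * u j - u i * w j))
                 + (\<Sum>i\<in>S. \<Sum>j\<in>{..<N} - S. aa i j * (w i * u j - u i * w j))"
    unfolding dec sum.distrib ..
  also have "(\<Sum>i\<in>S. \<Sum>j\<in>S. aa i j * (w i * u j - u i * w j)) = 0"
  proof -
    have "(\<Sum>i\<in>S. \<Sum>j\<in>S. aa i j * (u i * w j)) = (\<Sum>j\<in>S. \<Sum>i\<in>S. aa i j * (u i * w j))"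
      by (rule sum.swap)
    also have "\<dots> = (\<Sum>i\<in>S. \<Sum>j\<in>S. aa i j * (w i * u j))"
      by (intro sum.cong refl) (simp add: aa_sym mult_ac)
    finally show ?thesis by (simp add: right_diff_distrib sum_subtractf)
  qed
  finally show ?thesis by simp
qed

end



lemma rtranclp_map:
  assumes "\<And>x y. R x y \<Longrightarrow> S\<^sup>*\<^sup>* (f x) (f y)" and "R\<^sup>*\<^sup>* a b"
  shows "S\<^sup>*\<^sup>* (f a) (f b)"
  using assms(2) by (induction rule: rtranclp_induct) (auto intro: rtranclp_trans assms(1))

lemma rtranclp_sym:
  assumes "\<And>x y. R x y \<Longrightarrow> R y x" and "R\<^sup>*\<^sup>* a b"
  shows "R\<^sup>*\<^sup>* b a"
  using assms(2) by (induction rule: rtranclp_induct)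
    (auto intro: converse_rtranclp_into_rtranclp assms(1))

lemma rtranclp_list:
  assumes "R\<^sup>*\<^sup>* a b"
  shows "\<exists>xs. xs \<noteq> [] \<and> hd xs = a \<and> last xs = b \<and> successively R xs \<and>
     (\<forall>v\<in>set xs. v = a \<or> (\<exists>u. R u v))"
  using assms
proof (induction rule: rtranclp_induct)
  case base
  then show ?case by (intro exI[of _ "[a]"]) auto
next
  case (step y z)
  then obtain xs where xs: "xs \<noteq> []" "hd xs = a" "last xs = y" "successively R xs"
    "\<forall>v\<in>set xs. v = a \<or> (\<exists>u. R u v)" by blast
  show ?case
    by (intro exI[of _ "xs @ [z]"]) (use xs step in \<open>auto simp: successively_append_iff\<close>)
qed

lemma successively_reach:
  "successively R xs \<Longrightarrow> xs \<noteq> [] \<Longrightarrow> R\<^sup>*\<^sup>* (hd xs) (last xs)"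
proof (induction xs)
  case Nil then show ?case by simp
next
  case (Cons x xs)
  show ?case
  proof (cases xs)
    case Nil then show ?thesis by simp
  next
    case (Cons y ys)
    then have "R x y" "successively R xs" using Cons.prems by auto
    then show ?thesis using Cons.IH Cons by (auto intro: converse_rtranclp_into_rtranclp)
  qed
qed

context PS begin

definition adjM :: "nat \<Rightarrow> nat \<Rightarrow> nat \<Rightarrow> bool" where
  "adjM M a b \<longleftrightarrow> a < M \<and> b < M \<and> a \<noteq> b \<and> prox (max a b) (min a b) \<and>
     \<not> (\<exists>k<M. prox k (min a b) \<and> prox k (max a b))"

lemma adj_adjM: "adj a b = adjM N a b"
proof -
  have "(\<exists>k. prox k (min a b) \<and> prox k (max a b)) \<longleftrightarrow> (\<exists>k<N. prox k (min a b) \<and> prox k (max a b))"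
    using prox_lt by blast
  then show ?thesis unfolding adjM_def dual_adj_def Let_def by simp
qed

lemma adjM_sym: "adjM M a b = adjM M b a"
  unfolding adjM_def by (simp only: min.commute[of a b] max.commute[of a b]) blast

lemma adjM_lt: "adjM M a b \<Longrightarrow> a < M \<and> b < M \<and> a \<noteq> b"
  unfolding adjM_def by blast

lemma adjM_less:
  assumes ab: "a < b"
  shows "adjM M a b \<longleftrightarrow> b < M \<and> prox b a \<and> \<not> (\<exists>k<M. prox k a \<and> prox k b)"
proof -
  have "min a b = a" "max a b = b" using ab by auto
  then show ?thesis unfolding adjM_def using ab by auto
qed

lemma adjM_mono: "adjM (Suc M) a b \<Longrightarrow> a < M \<Longrightarrow> b < M \<Longrightarrow> adjM M a b"
  unfolding adjM_def by auto

lemma adjM_new: "adjM (Suc M) M y \<longleftrightarrow> prox M y"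
proof
  assume h: "adjM (Suc M) M y"
  then have "y < M" using adjM_lt[OF h] by auto
  then show "prox M y" using h adjM_less[of y M "Suc M"] adjM_sym by blast
next
  assume p: "prox M y"
  then have y: "y < M" using prox_lt by blast
  have "\<not> (prox k y \<and> prox k M)" if "k < Suc M" for k
    using prox_lt[of k M] that by auto
  then have "adjM (Suc M) y M" using adjM_less[of y M "Suc M"] y p by blast
  then show "adjM (Suc M) M y" using adjM_sym by blast
qed

lemma adjM_old:
  assumes e: "adjM M a b" and n: "\<not> adjM (Suc M) a b"
  shows "prox M a \<and> prox M b"
proof -
  have ab: "a < M" "b < M" "a \<noteq> b" using adjM_lt[OF e] by auto
  have main: "prox M x \<and> prox M y" if xy: "x < y" "adjM M x y" "\<not> adjM (Suc M) x y" for x y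
  proof -
    have 1: "y < M" "prox y x" "\<not> (\<exists>k<M. prox k x \<and> prox k y)" using adjM_less[of x y M] xy by auto
    then have "\<exists>k<Suc M. prox k x \<and> prox k y" using adjM_less[of x y "Suc M"] xy by auto
    then obtain k where k: "k < Suc M" "prox k x" "prox k y" by blast
    then have "k = M" using 1 by (metis less_SucE)
    then show ?thesis using k by simp
  qed
  show ?thesis
  proof (cases "a < b")
    case True then show ?thesis using main e n by blast
  next
    case False then have "b < a" using ab by simp
    then show ?thesis using main[of b a] e n adjM_sym by blast
  qed
qed

lemma adjM_pair_lt:
  assumes c: "prox M c" and y: "prox M y" and cy: "c < y"
  shows "adjM M c y \<and> \<not> adjM (Suc M) c y"
proof -
  have cM: "y < M" using prox_lt y by auto
  have t: "prox y c" using prox_tri[OF c y cy] .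
  have "\<not> (prox k c \<and> prox k y)" if "k < M" for k
  proof
    assume "prox k c \<and> prox k y"
    then have "k = M" using prox_uniq[of k c y M] c y cy by blast
    then show False using that by simp
  qed
  then have "adjM M c y" using adjM_less[of c y M] cM t cy by blast
  moreover have "\<not> adjM (Suc M) c y" using adjM_less[of c y "Suc M"] c y cy by blast
  ultimately show ?thesis by simp
qed

lemma adjM_pair:
  assumes c: "prox M c" and y: "prox M y" and cy: "c \<noteq> y"
  shows "adjM M c y \<and> \<not> adjM (Suc M) c y"
proof (cases "c < y")
  case True then show ?thesis using adjM_pair_lt c y by blast
next
  case False then have "y < c" using cy by simp
  then show ?thesis using adjM_pair_lt[OF y c] adjM_sym by blast
qed

definition TE :: "nat \<Rightarrow> bool" where
  "TE M \<longleftrightarrow> (\<forall>a b. adjM M a b \<longrightarrow> \<not> (\<lambda>x y. adjM M x y \<and> {x,y} \<noteq> {a,b})\<^sup>*\<^sup>* a b)"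

lemma TE_step_M:
  assumes IH: "TE M" and ab: "adjM (Suc M) M b"
    and walk: "(\<lambda>x y. adjM (Suc M) x y \<and> {x,y} \<noteq> {M,b})\<^sup>*\<^sup>* M b"
  shows False
proof -
  have pb: "prox M b" using ab adjM_new by simp
  have bM: "b \<noteq> M" using adjM_lt[OF ab] by simp
  show False
  proof (cases "\<exists>c. prox M c \<and> c \<noteq> b")
    case True
    then obtain c where c: "prox M c" "c \<noteq> b" by blast
    have cb: "adjM M c b" using adjM_pair[OF c(1) pb c(2)] by simp
    have ncb: "\<not> adjM (Suc M) c b" using adjM_pair[OF c(1) pb c(2)] by simp
    define f where "f v = (if v = M then c else v)" for v
    let ?D = "\<lambda>x y. adjM (Suc M) x y \<and> {x,y} \<noteq> {M,b}"
    let ?D' = "\<lambda>x y. adjM M x y \<and> {x,y} \<noteq> {c,b}"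
    have "?D'\<^sup>*\<^sup>* (f x) (f y)" if d: "?D x y" for x y
    proof -
      have xy: "x < Suc M" "y < Suc M" "x \<noteq> y" using adjM_lt d by auto
      consider "x \<noteq> M" "y \<noteq> M" | "x = M" | "y = M" by blast
      then show ?thesis
      proof cases
        case 1
        then have "adjM M x y" using adjM_mono d xy by auto
        moreover have "{x,y} \<noteq> {c,b}"
        proof
          assume "{x,y} = {c,b}"
          then have "adjM (Suc M) c b" using d adjM_sym by (auto simp: doubleton_eq_iff)
          then show False using ncb by simp
        qed
        ultimately show ?thesis using 1 by (auto simp: f_def)
      next
        case 2
        then have py: "prox M y" using d adjM_new by simp
        have "y \<noteq> b" using d 2 by auto
        then have "y = c" using prox_three[OF py pb c(1)] c(2) by auto
        then show ?thesis using 2 by (simp add: f_def)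
      next
        case 3
        then have py: "prox M x" using d adjM_new adjM_sym by metis
        have "x \<noteq> b" using d 3 by auto
        then have "x = c" using prox_three[OF py pb c(1)] c(2) by auto
        then show ?thesis using 3 by (simp add: f_def)
      qed
    qed
    from rtranclp_map[of ?D ?D' f, OF this walk]
    have "?D'\<^sup>*\<^sup>* c b" using bM by (simp add: f_def)
    then show False using IH cb unfolding TE_def by blast
  next
    case False
    from walk show False
    proof (cases rule: converse_rtranclpE)
      case base then show False using bM by simp
    next
      case (step y)
      then have "prox M y" "y \<noteq> b" using adjM_new by auto
      then show False using False by blast
    qed
  qed
qed

lemma TE_all: "TE M"
proof (induction M)
  case 0 then show ?case unfolding TE_def adjM_def by simp
next
  case (Suc M)
  show ?case unfolding TE_def
  proof (intro allI impI notI)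
    fix a b
    assume ab: "adjM (Suc M) a b"
      and walk: "(\<lambda>x y. adjM (Suc M) x y \<and> {x,y} \<noteq> {a,b})\<^sup>*\<^sup>* a b"
    let ?D = "\<lambda>x y. adjM (Suc M) x y \<and> {x,y} \<noteq> {a,b}"
    have Dsym: "?D x y \<Longrightarrow> ?D y x" for x y using adjM_sym by (auto simp: insert_commute)
    consider "a = M" | "b = M" | "a \<noteq> M" "b \<noteq> M" by blast
    then show False
    proof cases
      case 1 then show False using TE_step_M[OF Suc.IH] ab walk by blast
    next
      case 2
      have "?D\<^sup>*\<^sup>* b a" by (rule rtranclp_sym[OF Dsym walk])
      moreover have "?D = (\<lambda>x y. adjM (Suc M) x y \<and> {x,y} \<noteq> {b,a})" by (auto simp: insert_commute)
      ultimately show False using TE_step_M[OF Suc.IH, of a] ab adjM_sym 2 by metis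
    next
      case 3
      have abM: "a < M" "b < M" using adjM_lt[OF ab] 3 by auto
      have abM': "adjM M a b" using adjM_mono ab abM by blast
      define c where "c = (SOME p. prox M p)"
      define f where "f v = (if v = M then c else v)" for v
      let ?D' = "\<lambda>x y. adjM M x y \<and> {x,y} \<noteq> {a,b}"
      have nab: "\<not> (prox M a \<and> prox M b)"
      proof
        assume "prox M a \<and> prox M b"
        then show False using adjM_pair[of M a b] ab adjM_lt[OF ab] by auto
      qed
      have "?D'\<^sup>*\<^sup>* (f x) (f y)" if d: "?D x y" for x y
      proof -
        have xy: "x < Suc M" "y < Suc M" "x \<noteq> y" using adjM_lt d by auto
        consider "x \<noteq> M" "y \<noteq> M" | "x = M" | "y = M" by blast
        then show ?thesis
        proof cases
          case 1
          then have "adjM M x y" using adjM_mono d xy by auto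
          then show ?thesis using 1 d by (auto simp: f_def)
        next
          case 2
          then have py: "prox M y" using d adjM_new by simp
          then have pc: "prox M c" unfolding c_def by (rule someI)
          have yM: "y \<noteq> M" using xy 2 by simp
          show ?thesis
          proof (cases "y = c")
            case True then show ?thesis using 2 by (simp add: f_def)
          next
            case False
            have "adjM M c y" using adjM_pair[of M c y] pc py False by auto
            moreover have "{c,y} \<noteq> {a,b}" using nab pc py by (auto simp: doubleton_eq_iff)
            ultimately show ?thesis using 2 yM by (auto simp: f_def)
          qed
        next
          case 3
          then have py: "prox M x" using d adjM_new adjM_sym by metis
          then have pc: "prox M c" unfolding c_def by (rule someI)
          have xM: "x \<noteq> M" using xy 3 by simp
          show ?thesis
          proof (cases "x = c")
            case True then show ?thesis using 3 by (simp add: f_def)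
          next
            case False
            have "adjM M x c" using adjM_pair[OF py pc False] by simp
            moreover have "{x,c} \<noteq> {a,b}" using nab pc py by (auto simp: doubleton_eq_iff)
            ultimately show ?thesis using 3 xM by (auto simp: f_def)
          qed
        qed
      qed
      from rtranclp_map[of ?D ?D' f, OF this walk]
      have "?D'\<^sup>*\<^sup>* a b" using 3 by (simp add: f_def)
      then show False using Suc.IH abM' unfolding TE_def by blast
    qed
  qed
qed

lemma conn0: "M \<le> N \<Longrightarrow> v < M \<Longrightarrow> (adjM M)\<^sup>*\<^sup>* v 0"
proof (induction M arbitrary: v)
  case 0 then show ?case by simp
next
  case (Suc M)
  have lift: "(adjM (Suc M))\<^sup>*\<^sup>* x 0" if "x < M" for x
  proof -
    have "(adjM M)\<^sup>*\<^sup>* x 0" using Suc that by simp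
    then show ?thesis
    proof (rule rtranclp_map[of "adjM M" "adjM (Suc M)" id, simplified, rotated])
      fix x y assume e: "adjM M x y"
      show "(adjM (Suc M))\<^sup>*\<^sup>* x y"
      proof (cases "adjM (Suc M) x y")
        case True then show ?thesis by simp
      next
        case False
        then have "prox M x" "prox M y" using adjM_old e by auto
        then have "adjM (Suc M) x M" "adjM (Suc M) M y" using adjM_new adjM_sym by metis+
        then show ?thesis by auto
      qed
    qed
  qed
  show ?case
  proof (cases "v < M")
    case True then show ?thesis using lift by simp
  next
    case False
    then have vM: "v = M" using Suc.prems by simp
    show ?thesis
    proof (cases "M = 0")
      case True then show ?thesis using vM by simp
    next
      case False
      then obtain p where p: "prox M p" using prox_exists[of M] Suc.prems by auto
      then have "p < M" using prox_lt by simp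
      then have "(adjM (Suc M))\<^sup>*\<^sup>* p 0" by (rule lift)
      moreover have "adjM (Suc M) M p" using adjM_new p by simp
      ultimately show ?thesis using vM by (auto intro: converse_rtranclp_into_rtranclp)
    qed
  qed
qed

lemma connected: "a < N \<Longrightarrow> b < N \<Longrightarrow> adj\<^sup>*\<^sup>* a b"
proof -
  assume ab: "a < N" "b < N"
  have e: "adj = adjM N" by (intro ext) (rule adj_adjM)
  have a0: "adj\<^sup>*\<^sup>* a 0" and b0: "adj\<^sup>*\<^sup>* b 0" using conn0[of N a] conn0[of N b] ab unfolding e by simp_all
  have "adj\<^sup>*\<^sup>* 0 b" by (rule rtranclp_sym[OF _ b0]) (use adj_sym in blast)
  then show ?thesis by (rule rtranclp_trans[OF a0])
qed

end



context PS begin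

definition adjm :: "nat \<Rightarrow> nat \<Rightarrow> nat \<Rightarrow> bool" where
  "adjm z x y \<longleftrightarrow> adj x y \<and> x \<noteq> z \<and> y \<noteq> z"

definition br :: "nat \<Rightarrow> nat \<Rightarrow> nat set" where
  "br m g = {v. g < N \<and> g \<noteq> m \<and> (adjm m)\<^sup>*\<^sup>* g v}"

lemma adjm_sym: "adjm z x y \<Longrightarrow> adjm z y x"
  unfolding adjm_def using adj_sym by blast

lemma is_walk_iff: "is_walk N prox xs \<longleftrightarrow> xs \<noteq> [] \<and> (\<forall>v\<in>set xs. v < N) \<and> successively adj xs"
  unfolding is_walk_def successively_conv_nth by simp

lemma walk_reach:
  assumes w: "is_walk N prox xs" and z: "z \<notin> set xs"
  shows "(adjm z)\<^sup>*\<^sup>* (hd xs) (last xs)"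
proof -
  have s: "successively adj xs" "xs \<noteq> []" using w is_walk_iff by auto
  have "successively (adjm z) xs"
    by (rule successively_mono[OF s(1)]) (use z in \<open>auto simp: adjm_def\<close>)
  then show ?thesis using successively_reach s(2) by blast
qed

lemma br_mem: "v \<in> br m g \<Longrightarrow> v < N \<and> v \<noteq> m"
proof -
  assume "v \<in> br m g"
  then have g: "g < N" "g \<noteq> m" and r: "(adjm m)\<^sup>*\<^sup>* g v" unfolding br_def by auto
  from r show ?thesis
  proof (cases rule: rtranclp.cases)
    case rtrancl_refl then show ?thesis using g by simp
  next
    case (rtrancl_into_rtrancl u)
    then show ?thesis using adj_lt unfolding adjm_def by blast
  qed
qed

lemma br_start: "g < N \<Longrightarrow> g \<noteq> m \<Longrightarrow> g \<in> br m g"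
  unfolding br_def by simp

lemma br_step: "x \<in> br m g \<Longrightarrow> adj x y \<Longrightarrow> y \<noteq> m \<Longrightarrow> y \<in> br m g"
proof -
  assume x: "x \<in> br m g" and a: "adj x y" "y \<noteq> m"
  then have "adjm m x y" using br_mem[OF x] unfolding adjm_def by simp
  then show ?thesis using x unfolding br_def by (auto intro: rtranclp.rtrancl_into_rtrancl)
qed

lemma branch_eq: "branch N prox m g = br m g"
proof
  show "branch N prox m g \<subseteq> br m g"
  proof
    fix v assume "v \<in> branch N prox m g"
    then obtain xs where xs: "is_walk N prox xs" "hd xs = g" "last xs = v" "m \<notin> set xs"
      unfolding branch_def by blast
    have ne: "xs \<noteq> []" using xs is_walk_iff by auto
    then have "g \<in> set xs" using xs(2) hd_in_set by blast
    then have "g < N" "g \<noteq> m" using xs is_walk_iff by auto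
    then show "v \<in> br m g" using walk_reach[OF xs(1) xs(4)] xs unfolding br_def by simp
  qed
next
  show "br m g \<subseteq> branch N prox m g"
  proof
    fix v assume v: "v \<in> br m g"
    then have g: "g < N" "g \<noteq> m" and r: "(adjm m)\<^sup>*\<^sup>* g v" unfolding br_def by auto
    obtain xs where xs: "xs \<noteq> []" "hd xs = g" "last xs = v" "successively (adjm m) xs"
      "\<forall>v\<in>set xs. v = g \<or> (\<exists>u. adjm m u v)" using rtranclp_list[OF r] by blast
    have el: "w < N \<and> w \<noteq> m" if w: "w \<in> set xs" for w
    proof -
      have "w = g \<or> (\<exists>u. adjm m u w)" using xs(5) w by blast
      then show ?thesis
      proof
        assume "\<exists>u. adjm m u w"
        then obtain u where "adjm m u w" by blast
        then show ?thesis using adj_lt unfolding adjm_def by blast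
      qed (use g in simp)
    qed
    have "successively adj xs"
      by (rule successively_mono[OF xs(4)]) (auto simp: adjm_def)
    then have "is_walk N prox xs" using xs el is_walk_iff by auto
    then show "v \<in> branch N prox m g" unfolding branch_def using xs el by blast
  qed
qed

lemma tree: assumes ab: "adj a b" shows "br a b \<inter> br b a = {}"
proof (rule ccontr)
  assume "br a b \<inter> br b a \<noteq> {}"
  then obtain v where v1: "(adjm a)\<^sup>*\<^sup>* b v" and v2: "(adjm b)\<^sup>*\<^sup>* a v" unfolding br_def by blast
  let ?D = "\<lambda>x y. adjM N x y \<and> {x,y} \<noteq> {a,b}"
  have e: "adj = adjM N" by (intro ext) (rule adj_adjM)
  have Dsym: "?D x y \<Longrightarrow> ?D y x" for x y using adjM_sym by (auto simp: insert_commute)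
  have m1: "?D\<^sup>*\<^sup>* b v"
    by (rule rtranclp_map[of "adjm a" ?D "\<lambda>x. x", OF _ v1]) (rule r_into_rtranclp, simp add: adjm_def e doubleton_eq_iff)
  have m2: "?D\<^sup>*\<^sup>* a v"
    by (rule rtranclp_map[of "adjm b" ?D "\<lambda>x. x", OF _ v2]) (rule r_into_rtranclp, simp add: adjm_def e doubleton_eq_iff)
  have "?D\<^sup>*\<^sup>* v b" by (rule rtranclp_sym[OF Dsym m1])
  then have "?D\<^sup>*\<^sup>* a b" by (rule rtranclp_trans[OF m2])
  moreover have "adjM N a b" using ab e by simp
  ultimately show False using TE_all[of N] unfolding TE_def by blast
qed

lemma tree_nb: assumes ab: "adj a b" and x: "x \<in> br a b" and xa: "adj x a" shows "x = b"
proof (rule ccontr)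
  assume xb: "x \<noteq> b"
  have a: "a < N" "a \<noteq> b" using adj_lt[OF ab] by auto
  have "adjm b a x" using xa adj_sym xb a unfolding adjm_def by blast
  then have "x \<in> br b a" using a unfolding br_def by auto
  then show False using tree[OF ab] x by blast
qed

lemma br_union: assumes ab: "adj a b" and v: "v < N" shows "v \<in> br a b \<or> v \<in> br b a"
proof -
  have a: "a < N" "b < N" "a \<noteq> b" using adj_lt[OF ab] by auto
  have "adj\<^sup>*\<^sup>* a v" using connected a v by blast
  then show ?thesis
  proof (induction rule: rtranclp_induct)
    case base then show ?case using br_start a by auto
  next
    case (step y z)
    from step.IH show ?case
    proof
      assume y: "y \<in> br a b"
      show ?case
      proof (cases "z = a")
        case True then show ?thesis using br_start a by auto
      next
        case False then show ?thesis using br_step[OF y step.hyps(2)] by blast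
      qed
    next
      assume y: "y \<in> br b a"
      show ?case
      proof (cases "z = b")
        case True then show ?thesis using br_start a by auto
      next
        case False then show ?thesis using br_step[OF y step.hyps(2)] by blast
      qed
    qed
  qed
qed

lemma br_side:
  assumes ab: "adj a b" and x: "x \<in> br a b" and xy: "adj x y" and ne: "{x,y} \<noteq> {a,b}"
  shows "y \<in> br a b"
proof -
  have "y \<noteq> a"
  proof
    assume "y = a"
    then have "x = b" using tree_nb[OF ab x] xy by simp
    then show False using ne \<open>y = a\<close> by (auto simp: insert_commute)
  qed
  then show ?thesis using br_step[OF x xy] by blast
qed

lemma br_nb:
  assumes ma: "adj m a" and mb: "adj m b" and va: "v \<in> br m a" and vb: "v \<in> br m b"
  shows "a = b"
proof (rule ccontr)
  assume ab: "a \<noteq> b"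
  have r1: "(adjm m)\<^sup>*\<^sup>* a v" and r2: "(adjm m)\<^sup>*\<^sup>* b v" using va vb unfolding br_def by auto
  have "(adjm m)\<^sup>*\<^sup>* v b" by (rule rtranclp_sym[OF _ r2]) (rule adjm_sym)
  then have "(adjm m)\<^sup>*\<^sup>* a b" by (rule rtranclp_trans[OF r1])
  then have b1: "b \<in> br m a" using adj_lt[OF ma] unfolding br_def by auto
  have "adjm a m b" using mb ab adj_lt[OF ma] unfolding adjm_def by auto
  then have b2: "b \<in> br a m" using adj_lt[OF ma] unfolding br_def by auto
  show False using tree[OF ma] b1 b2 by blast
qed

lemma path_uniq:
  "is_path N prox xs \<Longrightarrow> is_path N prox ys \<Longrightarrow> hd xs = hd ys \<Longrightarrow> last xs = last ys \<Longrightarrow> xs = ys"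
proof (induction xs arbitrary: ys)
  case Nil then show ?case by (simp add: is_path_def is_walk_def)
next
  case (Cons x xs)
  obtain y ys' where ys: "ys = y # ys'" using Cons.prems(2) by (cases ys) (auto simp: is_path_def is_walk_def)
  have yx: "y = x" using Cons.prems(3) ys by simp
  have dx: "x \<notin> set xs" "distinct xs" using Cons.prems(1) by (auto simp: is_path_def)
  have dy: "x \<notin> set ys'" "distinct ys'" using Cons.prems(2) ys yx by (auto simp: is_path_def)
  show ?case
  proof (cases "xs = []")
    case True
    then have "last ys = x" using Cons.prems(4) by simp
    then have "ys' = []" using dy ys yx by (metis last_ConsR last_in_set last.simps)
    then show ?thesis using True ys yx by simp
  next
    case False
    have ys'ne: "ys' \<noteq> []"
    proof
      assume "ys' = []"
      then have "last xs = x" using Cons.prems(4) ys yx False by simp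
      then show False using dx False last_in_set by metis
    qed
    have wx: "is_walk N prox (x # xs)" and wy: "is_walk N prox (x # ys')"
      using Cons.prems(1,2) ys yx by (auto simp: is_path_def)
    then have sx: "successively adj (x # xs)" "\<forall>v\<in>set (x#xs). v < N"
      and sy: "successively adj (x # ys')" "\<forall>v\<in>set (x#ys'). v < N" by (auto simp: is_walk_iff)
    have wx': "is_walk N prox xs" using sx False by (auto simp: is_walk_iff successively_Cons)
    have wy': "is_walk N prox ys'" using sy ys'ne by (auto simp: is_walk_iff successively_Cons)
    have a1: "adj x (hd xs)" using sx False by (auto simp: successively_Cons)
    have a2: "adj x (hd ys')" using sy ys'ne by (auto simp: successively_Cons)
    have lx: "last xs = last ys'" using Cons.prems(4) ys yx False ys'ne by simp
    have hx: "hd xs < N" "hd xs \<noteq> x" using a1 adj_lt by auto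
    have hy: "hd ys' < N" "hd ys' \<noteq> x" using a2 adj_lt by auto
    have v1: "last xs \<in> br x (hd xs)" using walk_reach[OF wx' dx(1)] hx unfolding br_def by simp
    have v2: "last xs \<in> br x (hd ys')" using walk_reach[OF wy' dy(1)] hy lx unfolding br_def by simp
    have "hd xs = hd ys'" using br_nb[OF a1 a2 v1 v2] .
    moreover have "is_path N prox xs" using wx' dx by (simp add: is_path_def)
    moreover have "is_path N prox ys'" using wy' dy by (simp add: is_path_def)
    ultimately have "xs = ys'" using Cons.IH lx by blast
    then show ?thesis using ys yx by simp
  qed
qed

lemma walk_shorten:
  "is_walk N prox ws \<Longrightarrow> \<exists>ps. is_path N prox ps \<and> hd ps = hd ws \<and> last ps = last ws \<and> length ps \<le> length ws"
proof (induction "length ws" arbitrary: ws rule: less_induct)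
  case less
  show ?case
  proof (cases "distinct ws")
    case True then show ?thesis using less.prems by (auto simp: is_path_def)
  next
    case False
    then obtain xs y ys zs where ws: "ws = xs @ [y] @ ys @ [y] @ zs"
      using not_distinct_decomp by blast
    let ?w = "xs @ [y] @ zs"
    have s: "successively adj ws" "\<forall>v\<in>set ws. v < N" using less.prems is_walk_iff by auto
    have A: "successively adj (xs @ [y])"
      using s(1) successively_append_iff[of adj "xs @ [y]" "ys @ y # zs"] ws by simp
    have B: "successively adj (y # zs)"
      using s(1) successively_append_iff[of adj "xs @ y # ys" "y # zs"] ws by simp
    have B': "successively adj zs" "zs = [] \<or> adj y (hd zs)"
      using B unfolding successively_Cons by auto
    have "successively adj ((xs @ [y]) @ zs)"
    proof (rule successively_append_iff[THEN iffD2], intro conjI)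
      show "successively adj (xs @ [y])" by (rule A)
      show "successively adj zs" by (rule B'(1))
      show "xs @ [y] = [] \<or> zs = [] \<or> adj (last (xs @ [y])) (hd zs)" using B'(2) by auto
    qed
    then have "successively adj ?w" by simp
    moreover have "\<forall>v\<in>set ?w. v < N" using s(2) ws by auto
    ultimately have w: "is_walk N prox ?w" using is_walk_iff by auto
    have lt: "length ?w < length ws" using ws by simp
    have "hd ?w = hd ws" "last ?w = last ws" using ws by (cases xs; simp; cases zs; simp)+
    then show ?thesis using less.hyps[OF lt w] lt by fastforce
  qed
qed

lemma path_take:
  assumes p: "is_path N prox xs" and i: "i < length xs"
  shows "is_path N prox (take (Suc i) xs)"
proof -
  have s: "successively adj xs" "\<forall>v\<in>set xs. v < N" "distinct xs" using p by (auto simp: is_path_def is_walk_iff)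
  have "successively adj (take (Suc i) xs)"
  proof -
    have "successively adj (take (Suc i) xs @ drop (Suc i) xs)" using s(1) by (simp only: append_take_drop_id)
    then show ?thesis by (rule successively_append_iff[THEN iffD1, THEN conjunct1])
  qed
  moreover have "\<forall>v\<in>set (take (Suc i) xs). v < N" using s(2) by (auto dest: in_set_takeD)
  moreover have "take (Suc i) xs \<noteq> []" using i by (cases xs) auto
  ultimately show ?thesis using s(3) by (simp add: is_path_def is_walk_iff)
qed

lemma path_drop:
  assumes p: "is_path N prox xs" and i: "i < length xs"
  shows "is_path N prox (drop i xs)"
proof -
  have s: "successively adj xs" "\<forall>v\<in>set xs. v < N" "distinct xs" using p by (auto simp: is_path_def is_walk_iff)
  have "successively adj (drop i xs)"
  proof -
    have "successively adj (take i xs @ drop i xs)" using s(1) by (simp only: append_take_drop_id)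
    then show ?thesis by (rule successively_append_iff[THEN iffD1, THEN conjunct2, THEN conjunct1])
  qed
  moreover have "\<forall>v\<in>set (drop i xs). v < N" using s(2) by (auto dest: in_set_dropD)
  moreover have "drop i xs \<noteq> []" using i by simp
  ultimately show ?thesis using s(3) by (simp add: is_path_def is_walk_iff)
qed

lemma gdist_path:
  assumes p: "is_path N prox xs" and i: "i < length xs"
  shows "gdist N prox (hd xs) (xs ! i) = i"
  unfolding gdist_def
proof (rule Least_equality)
  let ?t = "take (Suc i) xs"
  have pt: "is_path N prox ?t" by (rule path_take[OF p i])
  have ht1: "hd ?t = hd xs" by (cases xs; simp)
  have ht2: "last ?t = xs ! i" using i by (simp add: take_Suc_conv_app_nth)
  have ht3: "length ?t = Suc i" using i by simp
  note ht = ht1 ht2 ht3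
  have ptw: "is_walk N prox ?t" using pt by (simp add: is_path_def)
  show "\<exists>ys. is_walk N prox ys \<and> hd ys = hd xs \<and> last ys = xs ! i \<and> length ys = Suc i"
    by (rule exI[of _ ?t]) (intro conjI ptw ht)
  fix k assume "\<exists>ys. is_walk N prox ys \<and> hd ys = hd xs \<and> last ys = xs ! i \<and> length ys = Suc k"
  then obtain ys where ys: "is_walk N prox ys" "hd ys = hd xs" "last ys = xs ! i" "length ys = Suc k" by blast
  obtain ps where ps: "is_path N prox ps" "hd ps = hd ys" "last ps = last ys" "length ps \<le> length ys"
    using walk_shorten[OF ys(1)] by blast
  have "ps = ?t" using path_uniq[OF ps(1) pt] ps ys ht by simp
  then show "i \<le> k" using ps(4) ys(4) ht by simp
qed

lemma pb_eq:
  assumes p: "is_path N prox xs"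
  shows "path_between N prox (hd xs) (last xs) = set xs"
proof
  show "path_between N prox (hd xs) (last xs) \<subseteq> set xs"
  proof
    fix v assume "v \<in> path_between N prox (hd xs) (last xs)"
    then obtain ys where ys: "is_path N prox ys" "hd ys = hd xs" "last ys = last xs" "v \<in> set ys"
      unfolding path_between_def by blast
    have "xs = ys" using path_uniq[OF p ys(1)] ys(2,3) by simp
    then show "v \<in> set xs" using ys(4) by simp
  qed
  show "set xs \<subseteq> path_between N prox (hd xs) (last xs)"
    unfolding path_between_def using p by blast
qed

end



context PS begin

abbreviation PM where "PM \<equiv> prox_matrix N prox"
abbreviation AM where "AM \<equiv> transpose_mat PM * PM"
abbreviation VM where "VM \<equiv> val_matrix N prox"

definition vv :: "nat \<Rightarrow> nat \<Rightarrow> real" where "vv i j = VM $$ (i,j)"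

lemma PM_carrier: "PM \<in> carrier_mat N N" unfolding prox_matrix_def by simp

lemma PM_dims[simp]: "dim_row PM = N" "dim_col PM = N" unfolding prox_matrix_def by simp_all

lemma AM_carrier: "AM \<in> carrier_mat N N" using PM_carrier by simp

lemma AM_mult_vec:
  assumes v: "v \<in> carrier_vec N" and i: "i < N"
  shows "(AM *\<^sub>v v) $ i = Ax (\<lambda>j. v $ j) i"
proof -
  have "i < dim_row AM" using AM_carrier i by auto
  then have "(AM *\<^sub>v v) $ i = row AM i \<bullet> v" by (rule index_mult_mat_vec)
  also have "\<dots> = (\<Sum>j\<in>{0..<N}. row AM i $ j * v $ j)" using v by (simp add: scalar_prod_def)
  also have "\<dots> = (\<Sum>j<N. aa i j * v $ j)"
    by (rule sum.cong) (use i AM_carrier PtP_entry in auto)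
  finally show ?thesis unfolding Ax_def .
qed

lemma AM_inj:
  assumes v: "v \<in> carrier_vec N" and z: "AM *\<^sub>v v = 0\<^sub>v N"
  shows "v = 0\<^sub>v N"
proof -
  let ?x = "\<lambda>j. v $ j"
  have "Ax ?x i = 0" if "i < N" for i
    using AM_mult_vec[OF v that] z that by (metis index_zero_vec(1))
  then have "bl ?x ?x = 0" unfolding bl_def by simp
  then have "\<forall>k<N. v $ k = 0" using bl_zero by blast
  then show ?thesis using v by (intro eq_vecI) auto
qed

lemma det_AM: "det AM \<noteq> 0"
  using det_0_iff_vec_prod_zero_field[OF AM_carrier] AM_inj by blast

lemma VM_inv: "VM * AM = 1\<^sub>m N \<and> VM \<in> carrier_mat N N"
proof -
  have U: "AM \<in> Units (ring_mat TYPE(real) N ())" by (rule det_non_zero_imp_unit[OF AM_carrier det_AM])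
  have "mat_inverse AM \<noteq> None"
  proof
    assume "mat_inverse AM = None"
    from mat_inverse(1)[OF AM_carrier this, of "()"] U show False by simp
  qed
  then obtain B where B: "mat_inverse AM = Some B" by blast
  then have "VM = B" unfolding val_matrix_def by simp
  with mat_inverse(2)[OF AM_carrier B] show ?thesis by simp
qed

lemma VM_dims[simp]: "dim_row VM = N" "dim_col VM = N" using VM_inv by auto

lemma VA: assumes i: "i < N" and k: "k < N"
  shows "(\<Sum>n<N. vv i n * aa n k) = (if i = k then 1 else 0)"
proof -
  have VC: "VM \<in> carrier_mat N N" using VM_inv by simp
  have d: "i < dim_row VM" "k < dim_col AM" using VC AM_carrier i k by auto
  have "(VM * AM) $$ (i,k) = row VM i \<bullet> col AM k" by (rule index_mult_mat(1)[OF d])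
  also have "\<dots> = (\<Sum>n\<in>{0..<N}. row VM i $ n * col AM k $ n)" using AM_carrier by (simp add: scalar_prod_def)
  also have "\<dots> = (\<Sum>n<N. vv i n * aa n k)"
    by (rule sum.cong) (use i k VC AM_carrier PtP_entry in \<open>auto simp: vv_def\<close>)
  finally show ?thesis using VM_inv i k by simp
qed

lemma Ax_row: assumes r: "r < N" and k: "k < N"
  shows "Ax (vv r) k = (if k = r then 1 else 0)"
proof -
  have "Ax (vv r) k = (\<Sum>n<N. vv r n * aa n k)" unfolding Ax_def
    by (rule sum.cong) (simp_all add: aa_sym mult.commute)
  also have "\<dots> = (if k = r then 1 else 0)" using VA[OF r k] by auto
  finally show ?thesis .
qed

lemma V_pos: assumes r: "r < N" and n: "n < N" shows "vv r n > 0"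
proof -
  let ?w = "vv r"
  have A: "Ax ?w k = (if k = r then 1 else 0)" if "k < N" for k using Ax_row[OF r that] .
  have nn: "?w i \<ge> 0" if "i < N" for i
    by (rule nonneg_principle[OF _ that]) (use A in auto)
  have pos_r: "?w r > 0"
  proof (rule ccontr)
    assume "\<not> ?w r > 0"
    then have "?w r = 0" using nn[OF r] by simp
    then have "Ax ?w r \<le> 0" using Ax_zero_point(1)[of ?w r] nn r by blast
    then show False using A[OF r] by simp
  qed
  have "adj\<^sup>*\<^sup>* r n" using connected r n by blast
  then show ?thesis
  proof (induction rule: rtranclp_induct)
    case base then show ?case using pos_r by simp
  next
    case (step y z)
    have z: "z < N" using adj_lt[OF step.hyps(2)] by simp
    show ?case
    proof (rule ccontr)
      assume "\<not> ?w z > 0"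
      then have "?w z = 0" using nn[OF z] by simp
      then have "Ax ?w z < 0" using Ax_zero_point(2)[of ?w z y] nn z step.IH step.hyps(2) adj_sym by blast
      then show False using A[OF z] by (simp split: if_splits)
    qed
  qed
qed

end

locale PS3 = PS +
  fixes m g h :: nat
  assumes mN: "m < N" and gN: "g < N" and hN: "h < N"
begin

definition rh :: real where "rh = vv g m / vv m m"
definition u :: "nat \<Rightarrow> real" where "u n = vv g n - rh * vv m n"
definition w :: "nat \<Rightarrow> real" where "w = vv h"

lemma phi_eq: assumes n: "n < N" shows "phi N prox m g h n = u n / w n"
proof -
  have VC: "VM \<in> carrier_mat N N" using VM_inv by simp
  have r: "rho N prox m g m = rh" unfolding rho_def rh_def vv_def ..
  have "rhat N prox m g \<bullet> col VM n = (\<Sum>i\<in>{0..<N}. (rhat N prox m g) $ i * col VM n $ i)"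
    using VC by (simp add: scalar_prod_def)
  also have "\<dots> = (\<Sum>i<N. (if i = g then vv i n else 0) - (if i = m then rh * vv i n else 0))"
    by (rule sum.cong) (use VC n mN gN in \<open>auto simp: rhat_def r vv_def algebra_simps\<close>)
  also have "\<dots> = u n" using mN gN by (simp add: sum_subtractf u_def)
  finally show ?thesis unfolding phi_def w_def vv_def by simp
qed

lemma Ax_lin: "Ax (\<lambda>n. x n - c * y n) k = Ax x k - c * Ax y k"
  unfolding Ax_def by (simp add: right_diff_distrib sum_subtractf sum_distrib_left mult_ac)

lemma Au: assumes k: "k < N" shows "Ax u k = (if k = g then 1 else 0) - rh * (if k = m then 1 else 0)"
proof -
  have "u = (\<lambda>n. vv g n - rh * vv m n)" unfolding u_def by (rule ext) simp
  then show ?thesis using Ax_lin[of "vv g" rh "vv m" k] Ax_row[OF gN k] Ax_row[OF mN k] by simp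
qed

lemma Aw: "k < N \<Longrightarrow> Ax w k = (if k = h then 1 else 0)"
  unfolding w_def using Ax_row[OF hN] by simp

lemma w_pos: "n < N \<Longrightarrow> w n > 0" unfolding w_def using V_pos[OF hN] by simp

lemma rh_pos: "rh > 0" unfolding rh_def using V_pos[OF gN mN] V_pos[OF mN mN] by simp

lemma u_m: "u m = 0" unfolding u_def rh_def using V_pos[OF mN mN] by simp

lemma flux_val:
  assumes S: "S \<subseteq> {..<N}"
  shows "(\<Sum>i\<in>S. w i * Ax u i - u i * Ax w i)
     = (if g \<in> S then w g else 0) - (if m \<in> S then rh * w m else 0) - (if h \<in> S then u h else 0)"
proof -
  have fin: "finite S" using S finite_subset by blast
  have "(\<Sum>i\<in>S. w i * Ax u i - u i * Ax w i)
      = (\<Sum>i\<in>S. (if i = g then w i else 0) - (if i = m then rh * w i else 0) - (if i = h then u i else 0))"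
  proof (rule sum.cong[OF refl])
    fix i assume "i \<in> S"
    then have i: "i < N" using S by auto
    have e1: "Ax u i = (if i = g then 1 else 0) - rh * (if i = m then 1 else 0)" by (rule Au[OF i])
    have e2: "Ax w i = (if i = h then 1 else 0)" by (rule Aw[OF i])
    show "w i * Ax u i - u i * Ax w i
      = (if i = g then w i else 0) - (if i = m then rh * w i else 0) - (if i = h then u i else 0)"
      unfolding e1 e2 by (simp add: algebra_simps)
  qed
  also have "\<dots> = (if g \<in> S then w g else 0) - (if m \<in> S then rh * w m else 0) - (if h \<in> S then u h else 0)"
    using fin by (simp add: sum_subtractf sum.delta)
  finally show ?thesis .
qed

lemma uh: "u h = w g - rh * w m"
  using flux_val[of "{..<N}"] green[of "{..<N}" w u] gN mN hN by simp

lemma cut: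
  assumes ab: "adj a b"
  shows "(\<Sum>i\<in>br a b. w i * Ax u i - u i * Ax w i) = aa b a * (w b * u a - u b * w a)"
proof -
  let ?S = "br a b" and ?C = "{..<N} - br a b"
  have S: "?S \<subseteq> {..<N}" using br_mem by blast
  have fin: "finite ?S" using S finite_subset by blast
  have abN: "a < N" "b < N" "a \<noteq> b" using adj_lt[OF ab] by auto
  have bS: "b \<in> ?S" using br_start abN by simp
  have aC: "a \<in> ?C" using br_mem abN by auto
  have z: "aa i j * (w i * u j - u i * w j)
      = (if i = b then (if j = a then aa b a * (w b * u a - u b * w a) else 0) else 0)"
    if i: "i \<in> ?S" and j: "j \<in> ?C" for i j
  proof (cases "i = b \<and> j = a")
    case True then show ?thesis by simp
  next
    case False
    have ij: "i \<noteq> j" "i < N" "j < N" using i j br_mem by auto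
    have "\<not> adj i j"
    proof
      assume e: "adj i j"
      have "j = a"
      proof (rule ccontr)
        assume "j \<noteq> a"
        then have "j \<in> ?S" using br_step[OF i e] by blast
        then show False using j by blast
      qed
      then have "i = b" using tree_nb[OF ab i] e by simp
      then show False using False \<open>j = a\<close> by simp
    qed
    then have "aa i j = 0" using aa_off ij by simp
    then show ?thesis using False by auto
  qed
  have "(\<Sum>i\<in>?S. w i * Ax u i - u i * Ax w i) = (\<Sum>i\<in>?S. \<Sum>j\<in>?C. aa i j * (w i * u j - u i * w j))"
    by (rule green[OF S])
  also have "\<dots> = (\<Sum>i\<in>?S. \<Sum>j\<in>?C. (if i = b then (if j = a then aa b a * (w b * u a - u b * w a) else 0) else 0))"
    by (intro sum.cong refl z) auto
  also have "\<dots> = (\<Sum>i\<in>?S. (if i = b then aa b a * (w b * u a - u b * w a) else 0))"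
  proof (rule sum.cong[OF refl])
    fix i
    show "(\<Sum>j\<in>?C. (if i = b then (if j = a then aa b a * (w b * u a - u b * w a) else 0) else 0))
        = (if i = b then aa b a * (w b * u a - u b * w a) else 0)"
    proof (cases "i = b")
      case True
      have "finite ?C" by simp
      then show ?thesis using True aC by (simp add: sum.delta)
    qed simp
  qed
  also have "\<dots> = aa b a * (w b * u a - u b * w a)"
    using fin bS by (simp add: sum.delta)
  finally show ?thesis .
qed

lemma edge_less:
  assumes ab: "adj a b" and g: "g \<in> br a b" and m: "m \<notin> br a b"
  shows "u a / w a < u b / w b"
proof -
  have S: "br a b \<subseteq> {..<N}" using br_mem by blast
  have abN: "a < N" "b < N" "a \<noteq> b" using adj_lt[OF ab] by auto
  have pos: "(if g \<in> br a b then w g else 0) - (if m \<in> br a b then rh * w m else 0)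
        - (if h \<in> br a b then u h else 0) > 0"
    using g m uh w_pos[OF gN] w_pos[OF mN] rh_pos by auto
  have aab: "aa b a = -1" using aa_off[of b a] abN ab adj_sym by auto
  have "aa b a * (w b * u a - u b * w a) > 0" using cut[OF ab] flux_val[OF S] pos by simp
  then have "u a * w b < u b * w a" using aab by (simp add: algebra_simps)
  then show ?thesis using w_pos[OF abN(1)] w_pos[OF abN(2)] by (simp add: field_simps)
qed

lemma edge_eq:
  assumes ab: "adj a b" and g: "g \<notin> br a b" and m: "m \<notin> br a b" and h: "h \<notin> br a b"
  shows "u a / w a = u b / w b"
proof -
  have S: "br a b \<subseteq> {..<N}" using br_mem by blast
  have abN: "a < N" "b < N" "a \<noteq> b" using adj_lt[OF ab] by auto
  have aab: "aa b a = -1" using aa_off[of b a] abN ab adj_sym by auto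
  have "aa b a * (w b * u a - u b * w a) = 0" using cut[OF ab] flux_val[OF S] g m h by simp
  then have "u a * w b = u b * w a" using aab by (simp add: algebra_simps)
  then show ?thesis using w_pos[OF abN(1)] w_pos[OF abN(2)] by (simp add: field_simps)
qed

end



context PS3 begin

abbreviation f where "f n \<equiv> u n / w n"

lemma u_nonneg: "n < N \<Longrightarrow> u n \<ge> 0"
proof (rule nonneg_principle)
  fix i assume i: "i < N" and neg: "u i < 0"
  then have "i \<noteq> m" using u_m by auto
  then show "Ax u i \<ge> 0" using Au[OF i] by simp
qed

lemma br_ne_m: "v \<in> br m g \<Longrightarrow> v \<noteq> m" using br_mem by blast

lemma u_zero_out:
  assumes n: "n < N" and nS: "n \<notin> br m g"
  shows "u n = 0"
proof -
  let ?S = "br m g"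
  define y where "y i = (if i \<in> ?S then u i else 0)" for i
  define z where "z i = (if i \<in> ?S then 0 else u i)" for i
  have zu: "z = (\<lambda>i. u i - y i)" unfolding z_def y_def by (rule ext) simp
  have key: "z i * Ax z i = 0" if i: "i < N" for i
  proof (cases "i \<in> ?S \<or> i = m")
    case True then show ?thesis using u_m by (auto simp: z_def)
  next
    case False
    then have iS: "i \<notin> ?S" and im: "i \<noteq> m" by auto
    have ig: "i \<noteq> g"
    proof
      assume "i = g"
      then have "g \<in> ?S" using br_start gN im by simp
      then show False using iS \<open>i = g\<close> by simp
    qed
    have Ay: "Ax y i = 0" unfolding Ax_def
    proof (rule sum.neutral, intro ballI)
      fix n assume n: "n \<in> {..<N}"
      show "aa i n * y n = 0"
      proof (cases "n \<in> ?S")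
        case True
        have "\<not> adj i n"
        proof
          assume "adj i n"
          then have "i \<in> ?S" using br_step[OF True] adj_sym im by blast
          then show False using iS by simp
        qed
        moreover have "i \<noteq> n" using True iS by auto
        ultimately have "aa i n = 0" using aa_off i n by simp
        then show ?thesis by simp
      next
        case False then show ?thesis by (simp add: y_def)
      qed
    qed
    have "Ax z i = Ax u i - Ax y i" unfolding zu by (rule Ax_diff)
    also have "\<dots> = 0" using Au[OF i] Ay ig im by simp
    finally show ?thesis by simp
  qed
  have "bl z z = 0" unfolding bl_def using key by (intro sum.neutral) auto
  then have "z n = 0" using bl_zero n by blast
  then show ?thesis using nS by (simp add: z_def)
qed

lemma u_pos_in:
  assumes v: "v \<in> br m g"
  shows "u v > 0"
proof -
  have gm: "g \<noteq> m" and r: "(adjm m)\<^sup>*\<^sup>* g v" using v unfolding br_def by auto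
  have nn: "\<And>i. i < N \<Longrightarrow> u i \<ge> 0" using u_nonneg by blast
  have ug: "u g > 0"
  proof (rule ccontr)
    assume "\<not> u g > 0"
    then have "u g = 0" using nn[OF gN] by simp
    then have "Ax u g \<le> 0" using Ax_zero_point(1)[of u g] nn gN by blast
    then show False using Au[OF gN] gm by simp
  qed
  from r show ?thesis
  proof (induction rule: rtranclp_induct)
    case base then show ?case using ug by simp
  next
    case (step y z)
    have e: "adj y z" "z \<noteq> m" using step.hyps(2) unfolding adjm_def by auto
    have z: "z < N" using adj_lt[OF e(1)] by simp
    show ?case
    proof (rule ccontr)
      assume "\<not> u z > 0"
      then have "u z = 0" using nn[OF z] by simp
      then have "Ax u z < 0" using Ax_zero_point(2)[of u z y] nn z step.IH e(1) adj_sym by blast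
      then show False using Au[OF z] e(2) by (simp split: if_splits)
    qed
  qed
qed

lemma part1:
  assumes n: "n < N"
  shows "phi N prox m g h n \<ge> 0 \<and> (phi N prox m g h n > 0 \<longleftrightarrow> n \<in> branch N prox m g)"
proof -
  have wn: "w n > 0" using w_pos[OF n] .
  show ?thesis
  proof (cases "n \<in> br m g")
    case True
    then have "u n > 0" by (rule u_pos_in)
    then show ?thesis using True wn phi_eq[OF n] branch_eq by simp
  next
    case False
    then have "u n = 0" using u_zero_out n by blast
    then show ?thesis using False phi_eq[OF n] branch_eq by simp
  qed
qed

lemma distinct_parts:
  assumes d: "distinct xs" and k: "Suc k < length xs"
  shows "xs ! k \<notin> set (drop (Suc k) xs)" "xs ! Suc k \<notin> set (take (Suc k) xs)"
proof -
  have disj: "set (take (Suc k) xs) \<inter> set (drop (Suc k) xs) = {}"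
    using set_take_disj_set_drop_if_distinct[OF d, of "Suc k" "Suc k"] by simp
  have "xs ! k \<in> set (take (Suc k) xs)"
    using k by (auto simp: in_set_conv_nth intro!: exI[of _ k])
  then show "xs ! k \<notin> set (drop (Suc k) xs)" using disj by blast
  have "xs ! Suc k \<in> set (drop (Suc k) xs)"
    using k by (auto simp: in_set_conv_nth intro!: exI[of _ 0])
  then show "xs ! Suc k \<notin> set (take (Suc k) xs)" using disj by blast
qed

lemma path_edge:
  assumes p: "is_path N prox xs" and k: "Suc k < length xs"
  shows "adj (xs ! k) (xs ! Suc k)"
  using p k successively_nth[of adj xs k] by (simp add: is_path_def is_walk_iff)

lemma incr:
  assumes p: "is_path N prox xs" and hm: "hd xs = m" and lg: "last xs = g" and k: "Suc k < length xs"
  shows "f (xs ! k) < f (xs ! Suc k)"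
proof -
  let ?a = "xs ! k" and ?b = "xs ! Suc k"
  have ab: "adj ?a ?b" by (rule path_edge[OF p k])
  have abN: "?a < N" "?b < N" "?a \<noteq> ?b" using adj_lt[OF ab] by auto
  have d: "distinct xs" using p by (simp add: is_path_def)
  note dp = distinct_parts[OF d k]
  have pd: "is_path N prox (drop (Suc k) xs)" using path_drop[OF p k] .
  have "(adjm ?a)\<^sup>*\<^sup>* (hd (drop (Suc k) xs)) (last (drop (Suc k) xs))"
    using walk_reach[of "drop (Suc k) xs" ?a] pd dp(1) by (simp add: is_path_def)
  then have "(adjm ?a)\<^sup>*\<^sup>* ?b g" using k lg by (simp add: hd_drop_conv_nth)
  then have gS: "g \<in> br ?a ?b" using abN unfolding br_def by simp
  have kk: "k < length xs" using k by simp
  have pt: "is_path N prox (take (Suc k) xs)" using path_take[OF p kk] .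
  have "(adjm ?b)\<^sup>*\<^sup>* (hd (take (Suc k) xs)) (last (take (Suc k) xs))"
    using walk_reach[of "take (Suc k) xs" ?b] pt dp(2) by (simp add: is_path_def)
  moreover have "hd (take (Suc k) xs) = m" using hm by (cases xs) auto
  moreover have "last (take (Suc k) xs) = ?a" using kk by (simp add: take_Suc_conv_app_nth)
  ultimately have "(adjm ?b)\<^sup>*\<^sup>* m ?a" by simp
  then have "(adjm ?b)\<^sup>*\<^sup>* ?a m" using rtranclp_sym[of "adjm ?b" m ?a] adjm_sym by blast
  then have "m \<in> br ?b ?a" using abN unfolding br_def by simp
  then have mS: "m \<notin> br ?a ?b" using tree[OF ab] by blast
  show ?thesis by (rule edge_less[OF ab gS mS])
qed

lemma part2:
  assumes n1: "n \<in> path_between N prox m g" and n2: "n' \<in> path_between N prox m g"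
    and lt: "gdist N prox m n < gdist N prox m n'"
  shows "phi N prox m g h n < phi N prox m g h n'"
proof -
  obtain xs where p: "is_path N prox xs" and hm: "hd xs = m" and lg: "last xs = g"
    using n1 unfolding path_between_def by blast
  have PB: "path_between N prox m g = set xs" using pb_eq[OF p] hm lg by simp
  obtain i where i: "i < length xs" "xs ! i = n" using n1 PB by (auto simp: in_set_conv_nth)
  obtain j where j: "j < length xs" "xs ! j = n'" using n2 PB by (auto simp: in_set_conv_nth)
  have "gdist N prox m n = i" using gdist_path[OF p i(1)] hm i by simp
  moreover have "gdist N prox m n' = j" using gdist_path[OF p j(1)] hm j by simp
  ultimately have ij: "i < j" using lt by simp
  have chain: "i < j' \<longrightarrow> j' < length xs \<longrightarrow> f (xs ! i) < f (xs ! j')" for j'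
  proof (induction j')
    case 0 then show ?case by simp
  next
    case (Suc j')
    show ?case
    proof (intro impI)
      assume a: "i < Suc j'" "Suc j' < length xs"
      have step: "f (xs ! j') < f (xs ! Suc j')" using incr[OF p hm lg a(2)] .
      show "f (xs ! i) < f (xs ! Suc j')"
      proof (cases "i = j'")
        case True then show ?thesis using step by simp
      next
        case False then show ?thesis using Suc.IH a step by simp
      qed
    qed
  qed
  have "f n < f n'" using chain[of j] ij j i by simp
  moreover have "n < N" "n' < N" using i j p by (auto simp: is_path_def is_walk_iff)
  ultimately show ?thesis using phi_eq by simp
qed

lemma side:
  assumes ab: "adj a b" and nb: "\<not> (a \<in> set xs \<and> b \<in> set xs)" and p: "is_path N prox xs"
    and hm: "hd xs \<in> br a b"
  shows "set xs \<subseteq> br a b"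
proof -
  have "i < length xs \<longrightarrow> xs ! i \<in> br a b" for i
  proof (induction i)
    case 0 then show ?case using hm by (cases xs) auto
  next
    case (Suc i)
    show ?case
    proof
      assume a: "Suc i < length xs"
      have e: "adj (xs ! i) (xs ! Suc i)" by (rule path_edge[OF p a])
      have "xs ! i \<in> set xs" "xs ! Suc i \<in> set xs" using a by auto
      then have "{xs ! i, xs ! Suc i} \<noteq> {a,b}" using nb by (auto simp: doubleton_eq_iff)
      then show "xs ! Suc i \<in> br a b" using br_side[OF ab _ e] Suc.IH a by simp
    qed
  qed
  then show ?thesis by (auto simp: in_set_conv_nth)
qed

lemma part3:
  assumes hP: "h \<in> path_between N prox m g" and p: "is_path N prox xs"
    and c: "card (set xs \<inter> path_between N prox m g) \<le> 1"
    and n: "n \<in> set xs" and n': "n' \<in> set xs"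
  shows "phi N prox m g h n = phi N prox m g h n'"
proof -
  obtain xs0 where p0: "is_path N prox xs0" and hm: "hd xs0 = m" and lg: "last xs0 = g"
    using hP unfolding path_between_def by blast
  have PB: "path_between N prox m g = set xs0" using pb_eq[OF p0] hm lg by simp
  have ne0: "xs0 \<noteq> []" using p0 by (simp add: is_path_def is_walk_def)
  have mx: "m \<in> set xs0" "g \<in> set xs0" using hm lg ne0 by auto
  have hx: "h \<in> set xs0" using hP PB by simp
  have edge: "f (xs ! k) = f (xs ! Suc k)" if k: "Suc k < length xs" for k
  proof -
    let ?a = "xs ! k" and ?b = "xs ! Suc k"
    have ab: "adj ?a ?b" by (rule path_edge[OF p k])
    have ba: "adj ?b ?a" using ab adj_sym by blast
    have abN: "?a \<noteq> ?b" using adj_lt[OF ab] by auto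
    have nb: "\<not> (?a \<in> set xs0 \<and> ?b \<in> set xs0)"
    proof
      assume "?a \<in> set xs0 \<and> ?b \<in> set xs0"
      moreover have "?a \<in> set xs" "?b \<in> set xs" using k by auto
      ultimately have "{?a, ?b} \<subseteq> set xs \<inter> set xs0" by auto
      then have "card {?a, ?b} \<le> card (set xs \<inter> set xs0)" by (intro card_mono) auto
      then show False using c PB abN by simp
    qed
    have nb': "\<not> (?b \<in> set xs0 \<and> ?a \<in> set xs0)" using nb by blast
    have "m \<in> br ?a ?b \<or> m \<in> br ?b ?a" using br_union[OF ab mN] .
    then show ?thesis
    proof
      assume "m \<in> br ?a ?b"
      then have "set xs0 \<subseteq> br ?a ?b" using side[OF ab nb p0] hm by simp
      then have "g \<notin> br ?b ?a" "m \<notin> br ?b ?a" "h \<notin> br ?b ?a" using tree[OF ab] mx hx by blast+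
      then show ?thesis using edge_eq[OF ba] by simp
    next
      assume "m \<in> br ?b ?a"
      then have "set xs0 \<subseteq> br ?b ?a" using side[OF ba nb' p0] hm by simp
      then have "g \<notin> br ?a ?b" "m \<notin> br ?a ?b" "h \<notin> br ?a ?b" using tree[OF ab] mx hx by blast+
      then show ?thesis using edge_eq[OF ab] by simp
    qed
  qed
  have all: "k < length xs \<longrightarrow> f (xs ! k) = f (xs ! 0)" for k
    by (induction k) (use edge in auto)
  obtain i where i: "i < length xs" "xs ! i = n" using n by (auto simp: in_set_conv_nth)
  obtain j where j: "j < length xs" "xs ! j = n'" using n' by (auto simp: in_set_conv_nth)
  have "f n = f n'" using all[of i] all[of j] i j by simp
  moreover have "n < N" "n' < N" using n n' p by (auto simp: is_path_def is_walk_iff)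
  ultimately show ?thesis using phi_eq by simp
qed

end

theorem mainTheorem11:
  fixes N :: nat and prox :: "nat \<Rightarrow> nat \<Rightarrow> bool" and m g h :: nat
  assumes "proximity_structure N prox"
    and "m < N" and "g < N" and "h < N"
  shows "(\<forall>n<N. phi N prox m g h n \<ge> 0 \<and>
            (phi N prox m g h n > 0 \<longleftrightarrow> n \<in> branch N prox m g))
       \<and> (\<forall>n n'. n \<in> path_between N prox m g \<and> n' \<in> path_between N prox m g \<and>
            gdist N prox m n < gdist N prox m n' \<longrightarrow> phi N prox m g h n < phi N prox m g h n')
       \<and> (h \<in> path_between N prox m g \<longrightarrow>
            (\<forall>xs. is_path N prox xs \<and> card (set xs \<inter> path_between N prox m g) \<le> 1 \<longrightarrow>
               (\<forall>n\<in>set xs. \<forall>n'\<in>set xs. phi N prox m g h n = phi N prox m g h n')))"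
proof -
  interpret PS3 N prox m g h
    using assms by (unfold_locales) auto
  show ?thesis using part1 part2 part3 by blast
qed


end
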